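(* For every $t_0\in\mathbb{C}^*$ with $|t_0|<3-2\sqrt2$ or $|t_0|>3+2\sqrt2$, the specialized Burau representation $\rho_3^{t_0}:\mathcal{B}_3\to\mathrm{GL}(2,\mathbb{C})$ is faithful.
   Context: $\mathcal{B}_3$ is the braid group on three strands, with generators $\sigma_1,\sigma_2$ and the single relation $\sigma_1\sigma_2\sigma_1=\sigma_2\sigma_1\sigma_2$. For $t_0\in\mathbb{C}^*$, the specialized (reduced) Burau representation $\rho_3^{t_0}$ is the homomorphism defined by $\sigma_1\mapsto\begin{pmatrix}-t_0&1\\0&1\end{pmatrix}$, $\sigma_2\mapsto\begin{pmatrix}1&0\\t_0&-t_0\end{pmatrix}$. *)

theory Defs
  imports "HOL-Analysis.Analysis"
begin

text \<open>The braid group B_3, presented by generators sigma_1, sigma_2 and the single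
relation sigma_1 sigma_2 sigma_1 = sigma_2 sigma_1 sigma_2, realised as words in
the letters sigma_i^{+1}, sigma_i^{-1} modulo the congruence generated by free
cancellation and the braid relation.\<close>

datatype gen = S1 | S2

type_synonym letter = "gen \<times> bool"   \<comment> \<open>(g, True) = g, (g, False) = g^{-1}\<close>

type_synonym bword = "letter list"

fun inv_letter :: "letter \<Rightarrow> letter" where
  "inv_letter (g, b) = (g, \<not> b)"

inductive basic_rel :: "bword \<Rightarrow> bword \<Rightarrow> bool" where
  cancel: "basic_rel [x, inv_letter x] []"
| braid: "basic_rel [(S1,True),(S2,True),(S1,True)] [(S2,True),(S1,True),(S2,True)]"

inductive braid_eq :: "bword \<Rightarrow> bword \<Rightarrow> bool" where
  step: "basic_rel l r \<Longrightarrow> braid_eq (u @ l @ v) (u @ r @ v)"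
| refl: "braid_eq w w"
| sym: "braid_eq w w' \<Longrightarrow> braid_eq w' w"
| trans: "braid_eq w1 w2 \<Longrightarrow> braid_eq w2 w3 \<Longrightarrow> braid_eq w1 w3"

text \<open>Specialized reduced Burau matrices (index 1 = first row/column, 2 = second).\<close>
definition burau_s1 :: "complex \<Rightarrow> complex^2^2" where
  "burau_s1 t = (\<chi> i j. if i = 1 then (if j = 1 then - t else 1)
                          else (if j = 1 then 0 else 1))"

definition burau_s2 :: "complex \<Rightarrow> complex^2^2" where
  "burau_s2 t = (\<chi> i j. if i = 1 then (if j = 1 then 1 else 0)
                          else (if j = 1 then t else - t))"

fun burau_gen :: "complex \<Rightarrow> gen \<Rightarrow> complex^2^2" where
  "burau_gen t S1 = burau_s1 t"
| "burau_gen t S2 = burau_s2 t"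

fun burau_letter :: "complex \<Rightarrow> letter \<Rightarrow> complex^2^2" where
  "burau_letter t (g, True) = burau_gen t g"
| "burau_letter t (g, False) = matrix_inv (burau_gen t g)"

definition burau :: "complex \<Rightarrow> bword \<Rightarrow> complex^2^2" where
  "burau t w = foldr (\<lambda>x M. burau_letter t x ** M) w (mat 1)"

end

theory Submission
  imports Defs
begin

definition mk :: "complex \<Rightarrow> complex \<Rightarrow> complex \<Rightarrow> complex \<Rightarrow> complex^2^2" where
  "mk a b c d = (\<chi> i j. if i = 1 then (if j = 1 then a else b) else (if j = 1 then c else d))"

definition v2 :: "complex \<Rightarrow> complex \<Rightarrow> complex^2" where
  "v2 a b = (\<chi> i. if i = 1 then a else b)"

lemma two_ne: "(2::2) \<noteq> 1" by simp

lemma mk_nth: "mk a b c d $ 1 $ 1 = a" "mk a b c d $ 1 $ 2 = b"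
  "mk a b c d $ 2 $ 1 = c" "mk a b c d $ 2 $ 2 = d"
  by (simp_all add: mk_def)

lemma v2_nth: "v2 a b $ 1 = a" "v2 a b $ 2 = b"
  by (simp_all add: v2_def)

lemma mk_eq: "M = mk (M$1$1) (M$1$2) (M$2$1) (M$2$2)"
  unfolding mk_def vec_eq_iff forall_2 by simp

lemma v2_eq: "v = v2 (v$1) (v$2)"
  unfolding v2_def vec_eq_iff forall_2 by simp

lemma mk_inj: "mk a b c d = mk a' b' c' d' \<longleftrightarrow> a = a' \<and> b = b' \<and> c = c' \<and> d = d'"
  by (metis mk_nth)

lemma v2_inj: "v2 a b = v2 a' b' \<longleftrightarrow> a = a' \<and> b = b'"
  by (metis v2_nth)

lemma mk_mult: "mk a b c d ** mk e f g h = mk (a*e+b*g) (a*f+b*h) (c*e+d*g) (c*f+d*h)"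
  unfolding matrix_matrix_mult_def mk_def vec_eq_iff forall_2 by (simp add: sum_2)

lemma mk_mv: "mk a b c d *v v2 x y = v2 (a*x+b*y) (c*x+d*y)"
  unfolding matrix_vector_mult_def mk_def v2_def vec_eq_iff forall_2 by (simp add: sum_2)

lemma mat_mk: "mat c = mk c 0 0 c"
  unfolding mat_def mk_def vec_eq_iff forall_2 by simp

lemma smult_v2: "c *s v2 x y = v2 (c*x) (c*y)"
  unfolding v2_def vec_eq_iff forall_2 by simp

lemma zero_v2: "(0::complex^2) = v2 0 0"
  unfolding v2_def vec_eq_iff forall_2 by simp

lemma mat_comm: "mat c ** (M::complex^2^2) = M ** mat c"
  apply (subst (1 2) mk_eq[of M]) unfolding mat_mk mk_mult by (simp add: mult.commute)

lemma mat_mat: "mat c ** mat d = (mat (c*d) :: complex^2^2)"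
  unfolding mat_mk mk_mult by simp

lemma mat_inj: "(mat c :: complex^2^2) = mat d \<longleftrightarrow> c = d"
  unfolding mat_mk mk_inj by simp

lemma mat_mv: "(mat c :: complex^2^2) *v v = c *s v"
  apply (subst (1 2) v2_eq[of v]) unfolding mat_mk mk_mv smult_v2 by simp

lemma s1_mk: "burau_s1 t = mk (-t) 1 0 1"
  unfolding burau_s1_def mk_def by simp
lemma s2_mk: "burau_s2 t = mk 1 0 t (-t)"
  unfolding burau_s2_def mk_def by simp

lemma inv_some:
  assumes "A ** B = mat 1" "B ** A = (mat 1 :: complex^2^2)"
  shows "A ** matrix_inv A = mat 1 \<and> matrix_inv A ** A = mat 1"
proof -
  have "\<exists>A'. A ** A' = mat 1 \<and> A' ** A = mat 1" using assms by blast
  then show ?thesis unfolding matrix_inv_def by (rule someI_ex)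
qed

lemma gen_inv:
  assumes "t \<noteq> 0"
  shows "burau_gen t g ** matrix_inv (burau_gen t g) = mat 1 \<and> matrix_inv (burau_gen t g) ** burau_gen t g = mat 1"
proof (cases g)
  case S1
  show ?thesis unfolding S1 burau_gen.simps
    apply (rule inv_some[where B="mk (-1/t) (1/t) 0 1"])
    using assms unfolding s1_mk mk_mult mat_mk by (auto simp: field_simps)
next
  case S2
  show ?thesis unfolding S2 burau_gen.simps
    apply (rule inv_some[where B="mk 1 0 1 (-1/t)"])
    using assms unfolding s2_mk mk_mult mat_mk by (auto simp: field_simps)
qed

section \<open>burau is a homomorphism and respects braid_eq\<close>

lemma burau_nil[simp]: "burau t [] = mat 1" by (simp add: burau_def)
lemma burau_cons: "burau t (x # w) = burau_letter t x ** burau t w" by (simp add: burau_def)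
lemma burau_append: "burau t (u @ v) = burau t u ** burau t v"
  by (induction u) (simp_all add: burau_cons matrix_mul_assoc)

lemma burau_basic:
  assumes "t \<noteq> 0" "basic_rel l r"
  shows "burau t l = burau t r"
  using assms(2)
proof cases
  case (cancel x)
  obtain g b where x: "x = (g, b)" by (cases x)
  show ?thesis using gen_inv[OF assms(1), of g] unfolding cancel x
    by (cases b) (simp_all add: burau_cons)
next
  case braid
  show ?thesis unfolding braid by (simp add: burau_cons s1_mk s2_mk mk_mult algebra_simps)
qed

lemma burau_braid_eq:
  assumes "t \<noteq> 0" "braid_eq w w'"
  shows "burau t w = burau t w'"
  using assms(2)
  by induction (simp_all add: burau_append burau_basic[OF assms(1)])


section \<open>Word combinatorics in B_3\<close>

definition inv_word :: "bword \<Rightarrow> bword" where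
  "inv_word w = rev (map inv_letter w)"

lemma inv_inv_letter[simp]: "inv_letter (inv_letter x) = x"
  by (cases x) simp

lemma inv_word_simps[simp]: "inv_word [] = []" "inv_word (x # w) = inv_word w @ [inv_letter x]"
  "inv_word (inv_word w) = w"
  by (simp_all add: inv_word_def rev_map comp_def)

lemma be_ctx: "braid_eq w w' \<Longrightarrow> braid_eq (p @ w @ s) (p @ w' @ s)"
proof (induction rule: braid_eq.induct)
  case (step l r u v)
  then show ?case using braid_eq.step[OF step, of "p @ u" "v @ s"] by simp
next
  case (refl w) then show ?case by (rule braid_eq.refl)
next
  case (sym w w') then show ?case by (blast intro: braid_eq.sym)
next
  case (trans w1 w2 w3) then show ?case by (metis braid_eq.trans)
qed

lemma be_app: "braid_eq u u' \<Longrightarrow> braid_eq v v' \<Longrightarrow> braid_eq (u @ v) (u' @ v')"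
  by (metis be_ctx append_Nil append_Nil2 braid_eq.trans)

lemma be_eq: "braid_eq x y \<Longrightarrow> x = x' \<Longrightarrow> y = y' \<Longrightarrow> braid_eq x' y'" by simp

lemma be_cancel: "braid_eq (u @ [x, inv_letter x] @ v) (u @ v)"
  using braid_eq.step[OF basic_rel.cancel, of u x v] by simp

lemma be_inv_r: "braid_eq (w @ inv_word w) []"
proof (induction w)
  case Nil then show ?case by (simp add: braid_eq.refl)
next
  case (Cons x w)
  have "braid_eq ([x] @ (w @ inv_word w) @ [inv_letter x]) ([x] @ [] @ [inv_letter x])"
    by (rule be_ctx[OF Cons])
  moreover have "braid_eq ([] @ [x, inv_letter x] @ []) ([] @ [])" by (rule be_cancel)
  ultimately show ?case by (auto intro: braid_eq.trans)
qed

lemma be_inv_l: "braid_eq (inv_word w @ w) []"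
  using be_inv_r[of "inv_word w"] by simp

abbreviation "a1 \<equiv> (S1, True)"
abbreviation "a2 \<equiv> (S2, True)"
abbreviation "i1 \<equiv> (S1, False)"
abbreviation "i2 \<equiv> (S2, False)"

definition "wA = [a1, a2, a1]"
definition "wB = [a1, a2]"
definition "wBB = [a1, a2, a1, a2]"
definition "cw = [a1, a2, a1, a1, a2, a1]"
definition "cinv = inv_word cw"

lemma br: "braid_eq (u @ [a1, a2, a1] @ v) (u @ [a2, a1, a2] @ v)"
  by (rule braid_eq.step) (rule basic_rel.braid)
lemma brs: "braid_eq (u @ [a2, a1, a2] @ v) (u @ [a1, a2, a1] @ v)"
  by (rule braid_eq.sym[OF br])

definition central :: "bword \<Rightarrow> bool" where
  "central z \<longleftrightarrow> (\<forall>w. braid_eq (w @ z) (z @ w))"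

lemma central_letter_inv:
  assumes "braid_eq (x # z) (z @ [x])"
  shows "braid_eq (inv_letter x # z) (z @ [inv_letter x])"
proof -
  have 1: "braid_eq (inv_letter x # z) ([inv_letter x] @ (z @ [x, inv_letter x]))"
    using be_cancel[of "[inv_letter x] @ z" x "[]"] by (simp add: braid_eq.sym)
  have 2: "braid_eq ([inv_letter x] @ (z @ [x]) @ [inv_letter x]) ([inv_letter x] @ (x # z) @ [inv_letter x])"
    by (rule be_ctx[OF braid_eq.sym[OF assms]])
  have 3: "braid_eq ([] @ [inv_letter x, inv_letter (inv_letter x)] @ (z @ [inv_letter x])) ([] @ (z @ [inv_letter x]))"
    by (rule be_cancel)
  show ?thesis using 1 2 3 by (auto elim: braid_eq.trans)
qed

lemma cw_a1: "braid_eq (a1 # cw) (cw @ [a1])"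
proof -
  have "braid_eq [a1, a1, a2, a1, a1, a2, a1] [a1, a2, a1, a2, a1, a2, a1]"
    using br[of "[a1]" "[a1, a2, a1]"] by simp
  moreover have "braid_eq [a1, a2, a1, a2, a1, a2, a1] [a1, a2, a1, a1, a2, a1, a1]"
    using brs[of "[a1, a2, a1]" "[a1]"] by simp
  ultimately show ?thesis unfolding cw_def by (auto elim: braid_eq.trans)
qed

lemma cw_a2: "braid_eq (a2 # cw) (cw @ [a2])"
proof -
  have "braid_eq [a2, a1, a2, a1, a1, a2, a1] [a1, a2, a1, a1, a1, a2, a1]"
    using brs[of "[]" "[a1, a1, a2, a1]"] by simp
  moreover have "braid_eq [a1, a2, a1, a1, a1, a2, a1] [a1, a2, a1, a1, a2, a1, a2]"
    using br[of "[a1, a2, a1, a1]" "[]"] by simp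
  ultimately show ?thesis unfolding cw_def by (auto elim: braid_eq.trans)
qed

lemma cw_letter: "braid_eq (x # cw) (cw @ [x])"
proof -
  obtain g b where x: "x = (g, b)" by (cases x)
  show ?thesis
  proof (cases b)
    case True then show ?thesis using cw_a1 cw_a2 x by (cases g) auto
  next
    case False
    then show ?thesis using central_letter_inv[OF cw_a1] central_letter_inv[OF cw_a2] x by (cases g) auto
  qed
qed

lemma central_cw: "central cw"
  unfolding central_def
proof
  fix w show "braid_eq (w @ cw) (cw @ w)"
  proof (induction w)
    case Nil then show ?case by (simp add: braid_eq.refl)
  next
    case (Cons x w)
    have "braid_eq ([x] @ (w @ cw)) ([x] @ (cw @ w))" using be_app[OF braid_eq.refl Cons] .
    moreover have "braid_eq ((x # cw) @ w) ((cw @ [x]) @ w)" using be_app[OF cw_letter braid_eq.refl] .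
    ultimately show ?case by (auto elim: braid_eq.trans)
  qed
qed

lemma central_inv: "central z \<Longrightarrow> central (inv_word z)"
  unfolding central_def
proof
  fix w assume c: "\<forall>w. braid_eq (w @ z) (z @ w)"
  have 1: "braid_eq (w @ inv_word z) ((inv_word z @ z) @ w @ inv_word z)"
    using be_app[OF braid_eq.sym[OF be_inv_l[of z]] braid_eq.refl[of "w @ inv_word z"]] by simp
  have 2: "braid_eq (inv_word z @ (z @ w) @ inv_word z) (inv_word z @ (w @ z) @ inv_word z)"
    using be_ctx[OF braid_eq.sym[OF c[rule_format, of w]]] .
  have 3: "braid_eq ((inv_word z @ w) @ (z @ inv_word z)) ((inv_word z @ w) @ [])"
    using be_app[OF braid_eq.refl be_inv_r] .
  show "braid_eq (w @ inv_word z) (inv_word z @ w)" using 1 2 3 by (auto elim: braid_eq.trans)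
qed

lemma central_app: "central z1 \<Longrightarrow> central z2 \<Longrightarrow> central (z1 @ z2)"
  unfolding central_def
proof
  fix w assume c1: "\<forall>w. braid_eq (w @ z1) (z1 @ w)" and c2: "\<forall>w. braid_eq (w @ z2) (z2 @ w)"
  have 1: "braid_eq ((w @ z1) @ z2) ((z1 @ w) @ z2)" using be_app[OF c1[rule_format] braid_eq.refl] .
  have 2: "braid_eq (z1 @ (w @ z2)) (z1 @ (z2 @ w))" using be_app[OF braid_eq.refl c2[rule_format]] .
  show "braid_eq (w @ z1 @ z2) ((z1 @ z2) @ w)" using 1 2 by (auto elim: braid_eq.trans)
qed

lemma central_nil: "central []" unfolding central_def by (simp add: braid_eq.refl)

lemma central_rep: "central z \<Longrightarrow> central (concat (replicate n z))"
  by (induction n) (simp_all add: central_nil central_app)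

definition pw :: "int \<Rightarrow> bword" where
  "pw k = (if k \<ge> 0 then concat (replicate (nat k) cw) else concat (replicate (nat (-k)) cinv))"

lemma central_pw: "central (pw k)"
  unfolding pw_def cinv_def using central_rep central_inv central_cw by auto

lemma pw0[simp]: "pw 0 = []" by (simp add: pw_def)

lemma concat_rep_snoc: "concat (replicate n z) @ z = concat (replicate (Suc n) z)"
  by (induction n) simp_all

lemma pw_succ: "braid_eq (pw k @ cw) (pw (k + 1))"
proof (cases "k \<ge> 0")
  case True
  then have "nat (k+1) = Suc (nat k)" by simp
  then show ?thesis using True by (simp add: pw_def concat_rep_snoc braid_eq.refl)
next
  case False
  then obtain m where m: "nat (-k) = Suc m" by (metis gr0_implies_Suc zero_less_nat_eq neg_0_less_iff_less not_le)
  have mm: "nat (- k - 1) = m" using m by arith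
  have e: "pw (k+1) = concat (replicate m cinv)" using False m mm by (auto simp: pw_def)
  have "pw k = concat (replicate m cinv) @ cinv" using False m by (simp add: pw_def concat_rep_snoc)
  then have "pw k @ cw = concat (replicate m cinv) @ (cinv @ cw)" by simp
  moreover have "braid_eq (concat (replicate m cinv) @ (cinv @ cw)) (concat (replicate m cinv) @ [])"
    using be_app[OF braid_eq.refl be_inv_l[of cw]] unfolding cinv_def .
  ultimately show ?thesis using e by simp
qed

lemma pw_pred: "braid_eq (cinv @ pw k) (pw (k - 1))"
proof (cases "k > 0")
  case True
  then obtain m where m: "nat k = Suc m" by (metis gr0_implies_Suc zero_less_nat_eq)
  have mm: "nat (k - 1) = m" using m by arith
  have e: "pw (k-1) = concat (replicate m cw)" using True m mm by (auto simp: pw_def)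
  have "cinv @ pw k = (cinv @ cw) @ concat (replicate m cw)" using True m by (simp add: pw_def)
  moreover have "braid_eq ((cinv @ cw) @ concat (replicate m cw)) ([] @ concat (replicate m cw))"
    using be_app[OF be_inv_l[of cw] braid_eq.refl] unfolding cinv_def .
  ultimately show ?thesis using e by simp
next
  case False
  then have "nat (-(k-1)) = Suc (nat (-k))" by simp
  then show ?thesis using False by (simp add: pw_def braid_eq.refl)
qed


section \<open>Normal forms\<close>

datatype syl = SA | SB | SBB

fun sw :: "syl \<Rightarrow> bword" where
  "sw SA = wA" | "sw SB = wB" | "sw SBB = wBB"

fun csyl :: "syl \<Rightarrow> int \<times> syl list \<Rightarrow> int \<times> syl list" where
  "csyl SA (k, SA # l) = (k + 1, l)"
| "csyl SB (k, SB # l) = (k, SBB # l)"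
| "csyl SB (k, SBB # l) = (k + 1, l)"
| "csyl SBB (k, SB # l) = (k + 1, l)"
| "csyl SBB (k, SBB # l) = (k + 1, SB # l)"
| "csyl s (k, l) = (k, s # l)"

definition word_of :: "int \<times> syl list \<Rightarrow> bword" where
  "word_of N = pw (fst N) @ concat (map sw (snd N))"

lemma I2: "braid_eq (wB @ wBB) cw"
  using brs[of "[a1, a2, a1]" "[]"] by (simp add: wB_def wBB_def cw_def)

lemma I3: "braid_eq (wBB @ wBB) (cw @ wB)"
  using brs[of "[a1, a2, a1]" "[a1, a2]"] by (simp add: wB_def wBB_def cw_def)

lemma red_helper: "braid_eq X cw \<Longrightarrow> braid_eq (pw k @ X @ R) (pw (k + 1) @ R)"
proof -
  assume h: "braid_eq X cw"
  have 1: "braid_eq (pw k @ X @ R) (pw k @ cw @ R)" by (rule be_ctx[OF h])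
  have 2: "braid_eq ((pw k @ cw) @ R) (pw (k + 1) @ R)" by (rule be_app[OF pw_succ braid_eq.refl])
  show ?thesis using 1 2 by (auto elim: braid_eq.trans)
qed

lemma csyl_core: "braid_eq (pw k @ sw s @ concat (map sw l)) (word_of (csyl s (k, l)))"
proof (cases l)
  case Nil
  then show ?thesis by (cases s) (simp_all add: word_of_def braid_eq.refl)
next
  case (Cons s' l')
  let ?R = "concat (map sw l')"
  have AA: "braid_eq (pw k @ (wA @ wA) @ ?R) (pw (k + 1) @ ?R)"
    by (rule red_helper) (simp add: wA_def cw_def braid_eq.refl)
  have BBB: "braid_eq (pw k @ (wB @ wBB) @ ?R) (pw (k + 1) @ ?R)"
    by (rule red_helper[OF I2])
  have BBB2: "braid_eq (pw k @ (wBB @ wB) @ ?R) (pw (k + 1) @ ?R)"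
    by (rule red_helper) (use I2 in \<open>simp add: wB_def wBB_def\<close>)
  have BB4: "braid_eq (pw k @ (wBB @ wBB) @ ?R) (pw (k + 1) @ wB @ ?R)"
  proof -
    have 1: "braid_eq (pw k @ (wBB @ wBB) @ ?R) (pw k @ (cw @ wB) @ ?R)" by (rule be_ctx[OF I3])
    have 2: "braid_eq ((pw k @ cw) @ (wB @ ?R)) (pw (k + 1) @ (wB @ ?R))" by (rule be_app[OF pw_succ braid_eq.refl])
    show ?thesis using 1 2 by (auto elim: braid_eq.trans)
  qed
  have BB: "\<And>R. wB @ wB @ R = wBB @ R" by (simp add: wB_def wBB_def)
  show ?thesis using AA BBB BBB2 BB4 unfolding Cons
    by (cases s; cases s') (simp_all add: word_of_def braid_eq.refl BB)
qed

lemma csyl_be: "braid_eq (sw s @ word_of N) (word_of (csyl s N))"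
proof -
  obtain k l where N: "N = (k, l)" by (cases N)
  have 1: "braid_eq ((sw s @ pw k) @ concat (map sw l)) ((pw k @ sw s) @ concat (map sw l))"
    using be_app[OF central_pw[unfolded central_def, rule_format] braid_eq.refl] .
  show ?thesis using 1 csyl_core[of k s l] unfolding N word_of_def by (auto elim: braid_eq.trans)
qed

fun lsyl :: "letter \<Rightarrow> syl \<times> syl" where
  "lsyl (S1, True) = (SBB, SA)"
| "lsyl (S2, True) = (SA, SBB)"
| "lsyl (S1, False) = (SA, SB)"
| "lsyl (S2, False) = (SB, SA)"

lemma letter_id: "braid_eq (sw (fst (lsyl x)) @ sw (snd (lsyl x))) (cw @ [x])"
proof -
  obtain g b where x: "x = (g, b)" by (cases x)
  have c1: "braid_eq (wBB @ wA) (cw @ [a1])"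
    using brs[of "[a1, a2, a1]" "[a1]"] by (simp add: wA_def wBB_def cw_def)
  have c2: "braid_eq (wA @ wBB) (cw @ [a2])"
    by (simp add: wA_def wBB_def cw_def braid_eq.refl)
  have c3: "braid_eq (wA @ wB) (cw @ [i1])"
    using braid_eq.sym[OF be_cancel[of "[a1, a2, a1, a1, a2]" a1 "[]"]] by (simp add: wA_def wB_def cw_def)
  have c4: "braid_eq (wB @ wA) (cw @ [i2])"
  proof -
    have 1: "braid_eq [a1, a2, a1, a1, a2, a1, i2] [a1, a2, a1, a2, a1, a2, i2]"
      using br[of "[a1, a2, a1]" "[i2]"] by simp
    have 2: "braid_eq [a1, a2, a1, a2, a1, a2, i2] [a1, a2, a1, a2, a1]"
      using be_cancel[of "[a1, a2, a1, a2, a1]" a2 "[]"] by simp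
    show ?thesis using 1 2 by (auto simp: wA_def wB_def cw_def intro: braid_eq.sym elim: braid_eq.trans)
  qed
  show ?thesis using c1 c2 c3 c4 x by (cases g; cases b) auto
qed

definition act :: "letter \<Rightarrow> int \<times> syl list \<Rightarrow> int \<times> syl list" where
  "act x N = csyl (fst (lsyl x)) (csyl (snd (lsyl x)) (fst N - 1, snd N))"

lemma act_be: "braid_eq (x # word_of N) (word_of (act x N))"
proof -
  obtain k l where N: "N = (k, l)" by (cases N)
  define s1 where "s1 = fst (lsyl x)"
  define s2 where "s2 = snd (lsyl x)"
  define S where "S = concat (map sw l)"
  define W where "W = sw s1 @ sw s2"
  have L: "braid_eq [x] (cinv @ W)"
  proof -
    have 1: "braid_eq (cinv @ W) (cinv @ cw @ [x])" unfolding W_def s1_def s2_def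
      by (rule be_app[OF braid_eq.refl letter_id])
    have 2: "braid_eq ((cinv @ cw) @ [x]) ([] @ [x])" unfolding cinv_def
      by (rule be_app[OF be_inv_l braid_eq.refl])
    show ?thesis using 1 2 by (auto intro: braid_eq.sym elim: braid_eq.trans)
  qed
  have 1: "braid_eq ([x] @ word_of N) ((cinv @ W) @ word_of N)" by (rule be_app[OF L braid_eq.refl])
  have 2: "braid_eq ((cinv @ W) @ word_of N) ((W @ cinv) @ word_of N)"
    by (rule be_app[OF braid_eq.sym[OF central_inv[OF central_cw, folded cinv_def, unfolded central_def, rule_format]] braid_eq.refl])
  have 3: "braid_eq (W @ (cinv @ pw k) @ S) (W @ pw (k - 1) @ S)" by (rule be_ctx[OF pw_pred])
  have 4: "braid_eq (sw s1 @ (sw s2 @ word_of (k - 1, l))) (sw s1 @ word_of (csyl s2 (k - 1, l)))"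
    by (rule be_app[OF braid_eq.refl csyl_be])
  have 5: "braid_eq (sw s1 @ word_of (csyl s2 (k - 1, l))) (word_of (csyl s1 (csyl s2 (k - 1, l))))"
    by (rule csyl_be)
  have e1: "(W @ cinv) @ word_of N = W @ (cinv @ pw k) @ S" by (simp add: N word_of_def S_def)
  have e2: "W @ pw (k - 1) @ S = sw s1 @ (sw s2 @ word_of (k - 1, l))" by (simp add: W_def word_of_def S_def)
  have e3: "act x N = csyl s1 (csyl s2 (k - 1, l))" by (simp add: act_def N s1_def s2_def)
  show ?thesis using 1 2 3 4 5 e1 e2 e3 by (auto elim!: braid_eq.trans)
qed

fun nf :: "bword \<Rightarrow> int \<times> syl list" where
  "nf [] = (0, [])"
| "nf (x # w) = act x (nf w)"

lemma nf_be: "braid_eq w (word_of (nf w))"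
proof (induction w)
  case Nil then show ?case by (simp add: word_of_def braid_eq.refl)
next
  case (Cons x w)
  have "braid_eq ([x] @ w) ([x] @ word_of (nf w))" by (rule be_app[OF braid_eq.refl Cons])
  then show ?case using act_be[of x "nf w"] by (auto elim: braid_eq.trans)
qed

fun red :: "syl list \<Rightarrow> bool" where
  "red [] = True"
| "red [s] = True"
| "red (s1 # s2 # l) = ((s1 = SA) \<noteq> (s2 = SA) \<and> red (s2 # l))"

lemma red_tl: "red (s # l) \<Longrightarrow> red l"
  by (cases l) auto

lemma red_swapB: "red (s # l) \<Longrightarrow> s \<noteq> SA \<Longrightarrow> s' \<noteq> SA \<Longrightarrow> red (s' # l)"
  by (cases l) auto

lemma red_csyl: "red (snd N) \<Longrightarrow> red (snd (csyl s N))"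
proof -
  assume r: "red (snd N)"
  obtain k l where N: "N = (k, l)" by (cases N)
  show ?thesis
  proof (cases l)
    case Nil then show ?thesis using N by (cases s) auto
  next
    case (Cons s' l')
    have "red l'" using r N Cons red_tl by auto
    moreover have "red (s' # l')" using r N Cons by simp
    ultimately show ?thesis using N Cons red_swapB[of s' l'] by (cases s; cases s') auto
  qed
qed

lemma red_nf: "red (snd (nf w))"
  by (induction w) (simp_all add: act_def red_csyl)


section \<open>Matrices of syllables and ping-pong\<close>

abbreviation M :: "complex \<Rightarrow> syl \<Rightarrow> complex^2^2" where
  "M t s \<equiv> burau t (sw s)"

definition P :: "complex \<Rightarrow> syl list \<Rightarrow> complex^2^2" where
  "P t l = burau t (concat (map sw l))"

lemma P_Nil: "P t [] = mat 1" by (simp add: P_def)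
lemma P_Cons: "P t (s # l) = M t s ** P t l" by (simp add: P_def burau_append)
lemma P_snoc: "P t (l @ [s]) = P t l ** M t s" by (simp add: P_def burau_append)

lemma MA: "burau t wA = mk 0 (-t) (-(t^2)) 0"
  by (simp add: wA_def burau_cons s1_mk s2_mk mat_mk mk_mult mk_inj power2_eq_square)
lemma MB: "burau t wB = mk 0 (-t) t (-t)"
  by (simp add: wB_def burau_cons s1_mk s2_mk mat_mk mk_mult mk_inj)
lemma MBB: "burau t wBB = mk (-(t^2)) (t^2) (-(t^2)) 0"
  by (simp add: wBB_def burau_cons s1_mk s2_mk mat_mk mk_mult mk_inj power2_eq_square algebra_simps)

lemma MAA: "M t SA ** M t SA = mat (t^3)"
  by (simp add: MA mat_mk mk_mult mk_inj power2_eq_square power3_eq_cube)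
lemma MBB_eq: "M t SB ** M t SB = M t SBB"
  by (simp add: MB MBB mk_mult mk_inj power2_eq_square)
lemma MB4: "M t SBB ** M t SBB = mat (t^3) ** M t SB"
  by (simp add: MB MBB mat_mk mk_mult mk_inj power2_eq_square power3_eq_cube algebra_simps)

definition pp :: "complex \<Rightarrow> (complex^2) set \<Rightarrow> (complex^2) set \<Rightarrow> bool" where
  "pp t X Y \<longleftrightarrow> (\<forall>v\<in>Y. M t SA *v v \<in> X) \<and> (\<forall>v\<in>X. M t SB *v v \<in> Y) \<and> (\<forall>v\<in>X. M t SBB *v v \<in> Y)
     \<and> X \<inter> Y = {} \<and> 0 \<notin> X \<and> 0 \<notin> Y \<and> (\<forall>c v. c \<noteq> 0 \<longrightarrow> v \<in> X \<longrightarrow> c *s v \<in> X)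
     \<and> (\<forall>c v. c \<noteq> 0 \<longrightarrow> v \<in> Y \<longrightarrow> c *s v \<in> Y) \<and> X \<noteq> {}"

lemma ppmap:
  assumes "pp t X Y"
  shows "red l \<Longrightarrow> l \<noteq> [] \<Longrightarrow> v \<in> (if last l = SA then Y else X) \<Longrightarrow>
    P t l *v v \<in> (if hd l = SA then X else Y)"
proof (induction l arbitrary: v)
  case Nil then show ?case by simp
next
  case (Cons s l)
  show ?case
  proof (cases l)
    case Nil
    then show ?thesis using Cons.prems assms unfolding pp_def
      by (cases s) (auto simp: P_Cons P_Nil)
  next
    case (Cons s' l')
    have r: "red l" using Cons.prems red_tl by blast
    have ty: "(s = SA) \<noteq> (s' = SA)" using Cons.prems \<open>l = s' # l'\<close> by simp
    have "P t l *v v \<in> (if hd l = SA then X else Y)"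
      using Cons.IH[OF r] Cons.prems \<open>l = s' # l'\<close> by simp
    then show ?thesis using assms ty \<open>l = s' # l'\<close> unfolding pp_def
      by (cases s; cases s') (auto simp: P_Cons matrix_vector_mul_assoc[symmetric])
  qed
qed

lemma ppD:
  assumes "pp t X Y"
  shows "v \<in> Y \<Longrightarrow> M t SA *v v \<in> X" "v \<in> X \<Longrightarrow> M t SB *v v \<in> Y"
    "v \<in> X \<Longrightarrow> M t SBB *v v \<in> Y" "v \<in> X \<Longrightarrow> v \<notin> Y" "0 \<notin> X" "0 \<notin> Y"
    "c \<noteq> 0 \<Longrightarrow> v \<in> X \<Longrightarrow> c *s v \<in> X" "c \<noteq> 0 \<Longrightarrow> v \<in> Y \<Longrightarrow> c *s v \<in> Y"
    "\<exists>x. x \<in> X"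
proof -
  note d = assms[unfolded pp_def]
  show "v \<in> Y \<Longrightarrow> M t SA *v v \<in> X" using d by (elim conjE) (erule bspec)
  show "v \<in> X \<Longrightarrow> M t SB *v v \<in> Y" using d by (elim conjE) (erule bspec)
  show "v \<in> X \<Longrightarrow> M t SBB *v v \<in> Y" using d by (elim conjE) (erule bspec)
  show "v \<in> X \<Longrightarrow> v \<notin> Y" using d by (elim conjE) (simp add: disjoint_iff)
  show "0 \<notin> X" using d by (elim conjE)
  show "0 \<notin> Y" using d by (elim conjE)
  show "c \<noteq> 0 \<Longrightarrow> v \<in> X \<Longrightarrow> c *s v \<in> X" using d by (elim conjE) simp
  show "c \<noteq> 0 \<Longrightarrow> v \<in> Y \<Longrightarrow> c *s v \<in> Y" using d by (elim conjE) simp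
  show "\<exists>x. x \<in> X" using d by (elim conjE) auto
qed

lemma pp_contra1:
  assumes "pp t X Y" "v \<in> X" "c *s v \<in> Y" shows False
proof (cases "c = 0")
  case True then show ?thesis using assms ppD(6)[OF assms(1)] by simp
next
  case False then show ?thesis using ppD(4,7)[OF assms(1)] assms(2,3) by metis
qed

lemma pp_contra2:
  assumes "pp t X Y" "v \<in> Y" "c *s v \<in> X" shows False
proof (cases "c = 0")
  case True then show ?thesis using assms ppD(5)[OF assms(1)] by simp
next
  case False then show ?thesis using ppD(4,8)[OF assms(1)] assms(2,3) by metis
qed

lemma red_prefix: "red (l1 @ l2) \<Longrightarrow> red l1"
proof (induction l1)
  case Nil then show ?case by simp
next
  case (Cons s l1)
  then show ?case by (cases l1) auto
qed

lemma red_last: "red (m @ [s]) \<Longrightarrow> m \<noteq> [] \<Longrightarrow> (last m = SA) \<noteq> (s = SA)"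
proof (induction m)
  case Nil then show ?case by simp
next
  case (Cons a m)
  then show ?case by (cases m) auto
qed

lemma ns_same:
  assumes "pp t X Y" "red l" "l \<noteq> []" "(hd l = SA) = (last l = SA)"
  shows "P t l \<noteq> mat c"
proof
  assume e: "P t l = mat c"
  obtain x0 where x0: "x0 \<in> X" using ppD(9)[OF assms(1)] by blast
  show False
  proof (cases "hd l = SA")
    case True
    define v where "v = M t SB *v x0"
    have v: "v \<in> Y" using ppD(2)[OF assms(1) x0] unfolding v_def .
    have "P t l *v v \<in> X" using ppmap[OF assms(1,2,3)] v True assms(4) by auto
    then show False using pp_contra2[OF assms(1) v] e by (simp add: mat_mv)
  next
    case False
    have "P t l *v x0 \<in> Y" using ppmap[OF assms(1,2,3)] x0 False assms(4) by auto
    then show False using pp_contra1[OF assms(1) x0] e by (simp add: mat_mv)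
  qed
qed

lemma ns_AB:
  assumes "pp t X Y" "t \<noteq> 0" "red l" "l \<noteq> []" "hd l = SA" "last l \<noteq> SA"
  shows "P t l \<noteq> mat c"
proof
  assume e: "P t l = mat c"
  obtain x0 where x0: "x0 \<in> X" using ppD(9)[OF assms(1)] by blast
  define m where "m = butlast l"
  define s where "s = last l"
  have l: "l = m @ [s]" using assms(4) by (simp add: m_def s_def)
  have sA: "s \<noteq> SA" using assms(6) unfolding s_def .
  have mne: "m \<noteq> []"
  proof
    assume "m = []"
    then have "l = [s]" using l by simp
    then show False using assms(5) sA by simp
  qed
  have rm: "red m" using red_prefix assms(3) l by blast
  have lm: "last m = SA" using red_last[of m s] assms(3) l mne sA by simp
  have hm: "hd m = SA" using assms(5) l mne by simp
  obtain v where v: "v \<in> Y" and mv: "M t s *v v \<in> Y"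
  proof (cases s)
    case SA then show ?thesis using sA by simp
  next
    case SB
    have "M t SB *v x0 \<in> Y" using ppD(2)[OF assms(1) x0] .
    moreover have "M t SB *v (M t SB *v x0) \<in> Y"
      using ppD(3)[OF assms(1) x0] by (simp only: matrix_vector_mul_assoc MBB_eq)
    ultimately show ?thesis using that SB by blast
  next
    case SBB
    have "M t SBB *v x0 \<in> Y" using ppD(3)[OF assms(1) x0] .
    moreover have "M t SBB *v (M t SBB *v x0) = (t^3) *s (M t SB *v x0)"
      by (simp only: matrix_vector_mul_assoc MB4 mat_mv[symmetric])
    moreover have "(t^3) *s (M t SB *v x0) \<in> Y"
      using ppD(8)[OF assms(1) _ ppD(2)[OF assms(1) x0], of "t^3"] assms(2) by simp
    ultimately show ?thesis using that SBB by auto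
  qed
  have "P t m *v (M t s *v v) \<in> X" using ppmap[OF assms(1) rm mne] mv lm hm by simp
  then have "P t l *v v \<in> X" using l by (simp add: P_snoc matrix_vector_mul_assoc)
  then show False using pp_contra2[OF assms(1) v] e by (simp add: mat_mv)
qed

lemma ns:
  assumes "pp t X Y" "t \<noteq> 0" "red l" "l \<noteq> []"
  shows "P t l \<noteq> mat c"
proof (cases "(hd l = SA) = (last l = SA)")
  case True then show ?thesis by (rule ns_same[OF assms(1,3,4)])
next
  case False
  show ?thesis
  proof (cases "hd l = SA")
    case True
    have "last l \<noteq> SA" using True False by simp
    then show ?thesis by (rule ns_AB[OF assms(1,2,3,4) True])
  next
    case hB: False
    then have lA: "last l = SA" using False by simp
    obtain s m where l: "l = s # m" using assms(4) by (cases l) auto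
    have sB: "s \<noteq> SA" using hB l by simp
    have mne: "m \<noteq> []" using l lA sB by auto
    define n where "n = butlast m"
    have m: "m = n @ [SA]" using mne lA l by (metis append_butlast_last_id last_ConsR n_def)
    have r1: "red (s # n)" using assms(3) l m red_prefix[of "s # n" "[SA]"] by simp
    have r2: "red (SA # s # n)" using r1 sB by simp
    have lst: "last (s # n) \<noteq> SA" using red_last[of "s # n" SA] assms(3) l m by simp
    have ne: "P t (SA # s # n) \<noteq> mat c"
      using ns_AB[OF assms(1,2) r2] lst by simp
    show ?thesis
    proof
      assume e: "P t l = mat c"
      have "M t SA ** P t l ** M t SA = P t (SA # s # n) ** mat (t^3)"
        using l m MAA[of t] by (simp add: P_Cons P_snoc matrix_mul_assoc[symmetric])
      moreover have "M t SA ** P t l ** M t SA = mat (c * t^3)"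
      proof -
        have "M t SA ** P t l ** M t SA = M t SA ** (mat c ** M t SA)" using e by (simp add: matrix_mul_assoc)
        also have "\<dots> = M t SA ** (M t SA ** mat c)" by (simp only: mat_comm)
        also have "\<dots> = mat (t^3) ** mat c" by (simp only: matrix_mul_assoc MAA)
        finally show ?thesis by (simp add: mat_mat mult.commute)
      qed
      ultimately have "P t (SA # s # n) ** mat (t^3) = mat (c * t^3)" by simp
      then have "P t (SA # s # n) ** mat (t^3) ** mat (1 / t^3) = mat (c * t^3) ** mat (1 / t^3)" by simp
      moreover have "P t (SA # s # n) ** mat (t^3) ** mat (1 / t^3) = P t (SA # s # n)"
        using assms(2) by (simp only: matrix_mul_assoc[symmetric] mat_mat) simp
      moreover have "mat (c * t^3) ** mat (1 / t^3) = (mat c :: complex^2^2)"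
        using assms(2) by (simp only: mat_mat) simp
      ultimately have "P t (SA # s # n) = mat c" by simp
      then show False using ne by simp
    qed
  qed
qed


section \<open>Ping-pong sets\<close>

lemma MA_v: "burau t wA *v v2 x y = v2 (-(t*y)) (-(t^2*x))"
  by (simp add: MA mk_mv)
lemma MB_v: "burau t wB *v v2 x y = v2 (-(t*y)) (t*(x-y))"
  by (simp add: MB mk_mv v2_inj algebra_simps)
lemma MBB_v: "burau t wBB *v v2 x y = v2 (t^2*(y-x)) (-(t^2*x))"
  by (simp add: MBB mk_mv v2_inj algebra_simps)

lemma all_v2: "(\<forall>v. Q v) \<longleftrightarrow> (\<forall>x y. Q (v2 x y))"
  by (metis v2_eq)

lemma tri: "cmod (x - y) \<le> cmod x + cmod y" "cmod x - cmod y \<le> cmod (x - y)"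
  "cmod y - cmod x \<le> cmod (x - y)" "cmod (y - x) = cmod (x - y)"
  by (simp_all add: norm_triangle_ineq4 norm_triangle_ineq2 norm_minus_commute)
     (metis norm_minus_commute norm_triangle_ineq2)

definition X1 :: "(complex^2) set" where "X1 = {v. 2 * cmod (v$1) < cmod (v$2)}"
definition Y1 :: "(complex^2) set" where "Y1 = {v. 2 * cmod (v$2) < 3 * cmod (v$1)}"
definition X2 :: "(complex^2) set" where "X2 = {v. 2 * cmod (v$2) < cmod (v$1)}"
definition Y2 :: "(complex^2) set" where "Y2 = {v. 2 * cmod (v$1) < 3 * cmod (v$2)}"

lemma pp_large:
  assumes "3 \<le> cmod t"
  shows "pp t X1 Y1"
proof -
  define a where "a = cmod t"
  have a: "a \<ge> 3" using assms a_def by simp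
  have A: "\<forall>v\<in>Y1. M t SA *v v \<in> X1"
  proof (simp only: Ball_def all_v2, intro allI impI)
    fix x y assume "v2 x y \<in> Y1"
    then have h: "2 * cmod y < 3 * cmod x" by (simp add: Y1_def v2_nth)
    have "3 * cmod x \<le> a * cmod x" by (rule mult_right_mono) (use a in simp_all)
    then have "2 * cmod y < a * cmod x" using h by linarith
    then have "a * (2 * cmod y) < a * (a * cmod x)" using a by simp
    then show "M t SA *v v2 x y \<in> X1"
      by (simp add: MA_v X1_def v2_nth norm_mult norm_power a_def power2_eq_square algebra_simps)
  qed
  have B: "\<forall>v\<in>X1. M t SB *v v \<in> Y1"
  proof (simp only: Ball_def all_v2, intro allI impI)
    fix x y assume "v2 x y \<in> X1"
    then have h: "2 * cmod x < cmod y" by (simp add: X1_def v2_nth)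
    have "2 * cmod (x - y) < 3 * cmod y" using h tri(1)[of x y] by linarith
    then have "a * (2 * cmod (x - y)) < a * (3 * cmod y)" using a by simp
    then show "M t SB *v v2 x y \<in> Y1"
      by (simp add: MB_v Y1_def v2_nth norm_mult a_def mult_ac)
  qed
  have BB: "\<forall>v\<in>X1. M t SBB *v v \<in> Y1"
  proof (simp only: Ball_def all_v2, intro allI impI)
    fix x y assume "v2 x y \<in> X1"
    then have h: "2 * cmod x < cmod y" by (simp add: X1_def v2_nth)
    have "2 * cmod x < 3 * cmod (x - y)" using h tri(3)[of x y] tri(3)[of y x] tri(4)[of x y] norm_ge_zero[of x] by linarith
    then have "a^2 * (2 * cmod x) < a^2 * (3 * cmod (x - y))" using a by simp
    then show "M t SBB *v v2 x y \<in> Y1"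
      by (simp add: MBB_v Y1_def v2_nth norm_mult norm_power a_def tri(4) mult_ac)
  qed
  have D: "X1 \<inter> Y1 = {}"
  proof -
    { fix v :: "complex^2" assume "v \<in> X1" "v \<in> Y1"
      then have "2 * cmod (v$1) < cmod (v$2)" "2 * cmod (v$2) < 3 * cmod (v$1)"
        by (simp_all add: X1_def Y1_def)
      then have False using norm_ge_zero[of "v$1"] by linarith }
    then show ?thesis by blast
  qed
  have Z: "0 \<notin> X1" "0 \<notin> Y1" unfolding X1_def Y1_def by simp_all
  have CX: "\<forall>c v. c \<noteq> 0 \<longrightarrow> v \<in> X1 \<longrightarrow> c *s v \<in> X1"
    unfolding X1_def by (simp add: norm_mult)
  have CY: "\<forall>c v. c \<noteq> 0 \<longrightarrow> v \<in> Y1 \<longrightarrow> c *s v \<in> Y1"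
    unfolding Y1_def by (simp add: norm_mult)
  have NE: "v2 0 1 \<in> X1" unfolding X1_def by (simp add: v2_nth)
  show ?thesis unfolding pp_def using A B BB D Z CX CY NE by blast
qed

lemma pp_small:
  assumes "t \<noteq> 0" "cmod t \<le> 1/3"
  shows "pp t X2 Y2"
proof -
  define a where "a = cmod t"
  have a: "a \<le> 1/3" "a > 0" using assms a_def by simp_all
  have A: "\<forall>v\<in>Y2. M t SA *v v \<in> X2"
  proof (simp only: Ball_def all_v2, intro allI impI)
    fix x y assume "v2 x y \<in> Y2"
    then have h: "2 * cmod x < 3 * cmod y" by (simp add: Y2_def v2_nth)
    have "a * cmod x \<le> (1/3) * cmod x" by (rule mult_right_mono) (use a in simp_all)
    then have "2 * (a * cmod x) < cmod y" using h by linarith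
    then have "a * (2 * (a * cmod x)) < a * cmod y" using a by simp
    then show "M t SA *v v2 x y \<in> X2"
      by (simp add: MA_v X2_def v2_nth norm_mult norm_power a_def power2_eq_square algebra_simps)
  qed
  have B: "\<forall>v\<in>X2. M t SB *v v \<in> Y2"
  proof (simp only: Ball_def all_v2, intro allI impI)
    fix x y assume "v2 x y \<in> X2"
    then have h: "2 * cmod y < cmod x" by (simp add: X2_def v2_nth)
    have "2 * cmod y < 3 * cmod (x - y)" using h tri(2)[of x y] norm_ge_zero[of y] by linarith
    then have "a * (2 * cmod y) < a * (3 * cmod (x - y))" using a by simp
    then show "M t SB *v v2 x y \<in> Y2"
      by (simp add: MB_v Y2_def v2_nth norm_mult a_def mult_ac)
  qed
  have BB: "\<forall>v\<in>X2. M t SBB *v v \<in> Y2"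
  proof (simp only: Ball_def all_v2, intro allI impI)
    fix x y assume "v2 x y \<in> X2"
    then have h: "2 * cmod y < cmod x" by (simp add: X2_def v2_nth)
    have "2 * cmod (x - y) < 3 * cmod x" using h tri(1)[of x y] by linarith
    then have "a^2 * (2 * cmod (x - y)) < a^2 * (3 * cmod x)" using a by simp
    then show "M t SBB *v v2 x y \<in> Y2"
      by (simp add: MBB_v Y2_def v2_nth norm_mult norm_power a_def tri(4) mult_ac)
  qed
  have D: "X2 \<inter> Y2 = {}"
  proof -
    { fix v :: "complex^2" assume "v \<in> X2" "v \<in> Y2"
      then have "2 * cmod (v$2) < cmod (v$1)" "2 * cmod (v$1) < 3 * cmod (v$2)"
        by (simp_all add: X2_def Y2_def)
      then have False using norm_ge_zero[of "v$2"] by linarith }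
    then show ?thesis by blast
  qed
  have Z: "0 \<notin> X2" "0 \<notin> Y2" unfolding X2_def Y2_def by simp_all
  have CX: "\<forall>c v. c \<noteq> 0 \<longrightarrow> v \<in> X2 \<longrightarrow> c *s v \<in> X2"
    unfolding X2_def by (simp add: norm_mult)
  have CY: "\<forall>c v. c \<noteq> 0 \<longrightarrow> v \<in> Y2 \<longrightarrow> c *s v \<in> Y2"
    unfolding Y2_def by (simp add: norm_mult)
  have NE: "v2 1 0 \<in> X2" unfolding X2_def by (simp add: v2_nth)
  show ?thesis unfolding pp_def using A B BB D Z CX CY NE by blast
qed


section \<open>Central powers\<close>

lemma burau_rep: "burau t z = mat e \<Longrightarrow> burau t (concat (replicate n z)) = mat (e ^ n)"
  by (induction n) (simp_all add: burau_append mat_mat)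

lemma burau_cw: "burau t cw = mat (t^3)"
proof -
  have "cw = wA @ wA" by (simp add: cw_def wA_def)
  then have "burau t cw = burau t wA ** burau t wA" by (subst \<open>cw = wA @ wA\<close>) (rule burau_append)
  then show ?thesis using MAA[of t] by simp
qed

lemma burau_cinv:
  assumes "t \<noteq> 0" shows "burau t cinv = mat (1 / t^3)"
proof -
  have "burau t (cinv @ cw) = burau t []"
    using burau_braid_eq[OF assms be_inv_l[of cw]] by (simp add: cinv_def)
  then have e: "burau t cinv ** mat (t^3) = mat 1" by (simp add: burau_append burau_cw)
  have "burau t cinv = burau t cinv ** (mat (t^3) ** mat (1 / t^3))"
    using assms by (simp add: mat_mat)
  also have "\<dots> = mat (1 / t^3)" by (simp add: matrix_mul_assoc e)
  finally show ?thesis .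
qed

lemma pw_mat:
  assumes "t \<noteq> 0" "cmod t \<noteq> 1"
  shows "\<exists>d. burau t (pw k) = mat d \<and> d \<noteq> 0 \<and> (d = 1 \<longrightarrow> k = 0)"
proof -
  have c3: "cmod t ^ 3 \<noteq> 1"
  proof
    assume "cmod t ^ 3 = 1"
    then have "norm (cmod t) = 1" using power_eq_1_iff[of "cmod t" 3] by simp
    then show False using assms(2) by simp
  qed
  show ?thesis
  proof (cases "k \<ge> 0")
    case True
    have "burau t (pw k) = mat ((t^3) ^ nat k)"
      using True burau_rep[OF burau_cw] by (simp add: pw_def)
    moreover have "(t^3) ^ nat k = 1 \<longrightarrow> k = 0"
    proof
      assume "(t^3) ^ nat k = 1"
      then have "norm (t^3) = 1 \<or> nat k = 0" by (rule power_eq_1_iff)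
      then show "k = 0" using c3 True by (simp add: norm_power)
    qed
    ultimately show ?thesis using assms(1) by auto
  next
    case False
    have "burau t (pw k) = mat ((1 / t^3) ^ nat (-k))"
      using False burau_rep[OF burau_cinv[OF assms(1)]] by (simp add: pw_def)
    moreover have "(1 / t^3) ^ nat (-k) = 1 \<longrightarrow> k = 0"
    proof
      assume "(1 / t^3) ^ nat (-k) = 1"
      then have "norm (1 / t^3) = 1 \<or> nat (-k) = 0" by (rule power_eq_1_iff)
      moreover have "norm (1 / t^3) \<noteq> 1" using c3 by (simp add: norm_divide norm_power)
      ultimately show "k = 0" using False by simp
    qed
    ultimately show ?thesis using assms(1) by auto
  qed
qed

theorem theorem2:
  fixes t :: complex
  assumes "t \<noteq> 0"
    and "cmod t < 3 - 2 * sqrt 2 \<or> cmod t > 3 + 2 * sqrt 2"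
  shows "\<forall>w1 w2. burau t w1 = burau t w2 \<longrightarrow> braid_eq w1 w2"
proof (intro allI impI)
  fix w1 w2 assume e: "burau t w1 = burau t w2"
  have s43: "4/3 \<le> sqrt 2" by (rule real_le_rsqrt) (simp add: power2_eq_square)
  have s1: "1 < sqrt 2" using s43 by simp
  have cm: "cmod t \<noteq> 1"
  proof
    assume "cmod t = 1"
    then show False using assms(2) s1 by linarith
  qed
  obtain X Y where pp: "pp t X Y"
  proof (cases "cmod t < 3 - 2 * sqrt 2")
    case True
    then have "cmod t \<le> 1/3" using s43 by simp
    then show ?thesis using pp_small[OF assms(1)] that by blast
  next
    case False
    then have "cmod t > 3 + 2 * sqrt 2" using assms(2) by simp
    then have "3 \<le> cmod t" using s1 by linarith
    then show ?thesis using pp_large that by blast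
  qed
  define w where "w = w1 @ inv_word w2"
  have bw: "burau t w = mat 1"
  proof -
    have "burau t w = burau t (w2 @ inv_word w2)" by (simp add: w_def burau_append e)
    also have "\<dots> = burau t []" by (rule burau_braid_eq[OF assms(1) be_inv_r])
    finally show ?thesis by simp
  qed
  obtain k l where N: "nf w = (k, l)" by (cases "nf w")
  have red: "red l" using red_nf[of w] N by simp
  have "burau t (word_of (k, l)) = mat 1"
    using burau_braid_eq[OF assms(1) nf_be[of w]] bw N by simp
  then have e2: "burau t (pw k) ** P t l = mat 1" by (simp add: word_of_def burau_append P_def)
  obtain d where d: "burau t (pw k) = mat d" "d \<noteq> 0" "d = 1 \<longrightarrow> k = 0"
    using pw_mat[OF assms(1) cm] by blast
  have l0: "l = []"
  proof (rule ccontr)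
    assume ne: "l \<noteq> []"
    have "mat (1/d) ** (mat d ** P t l) = mat (1/d)" using e2 d(1) by simp
    then have "P t l = mat (1/d)" using d(2) by (simp add: matrix_mul_assoc mat_mat)
    then show False using ns[OF pp assms(1) red ne] by blast
  qed
  then have "mat d = (mat 1 :: complex^2^2)" using e2 d(1) by (simp add: P_Nil)
  then have "k = 0" using d(3) by (simp add: mat_inj)
  then have hw: "braid_eq w []" using nf_be[of w] N l0 by (simp add: word_of_def)
  have 1: "braid_eq (w1 @ []) (w1 @ (inv_word w2 @ w2))"
    by (rule be_app[OF braid_eq.refl braid_eq.sym[OF be_inv_l]])
  have 2: "braid_eq (w @ w2) ([] @ w2)" by (rule be_app[OF hw braid_eq.refl])
  show "braid_eq w1 w2" using 1 2 unfolding w_def by (auto elim: braid_eq.trans)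
qed

end
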